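(* Let $C:\mathbb{R}^n\to\mathbb{R}$ be convex, increasing and $\mathbf 1$-invariant. Then $\varphi:\mathbb{R}^n\to\mathbb{R}$, $\varphi(\vec q)=-C(-\vec q)$, is concave and increasing. Furthermore $\mathsf{ValTrades}_\varphi=\mathsf{ValTrades}'_C$, i.e. for every nonempty history $h$, \[\{\vec r\in\mathbb{R}^n\mid\varphi(\vec q_h+\vec r)=\varphi(\vec q_h)\}=\{\vec r+\alpha\mathbf 1\mid \vec r\in\mathbb{R}^n,\ \alpha=C(-\vec q_h-\vec r)-C(-\vec q_h)\}.\]
   Context: $\mathbf 1=(1,\dots,1)\in\mathbb{R}^n$. $C$ is $\mathbf 1$-invariant if $C(\vec q+\alpha\mathbf 1)=C(\vec q)+\alpha$ for all $\vec q,\alpha$; a function is increasing if $f(\vec q)>f(\vec q')$ whenever $\vec q\succeq\vec q'$ coordinatewise and $\vec q\neq\vec q'$. A history $h$ is a finite list of vectors in $\mathbb{R}^n$ and $\vec q_h$ is their sum. $\mathsf{ValTrades}_\varphi(h)=\{\vec r\mid\varphi(\vec q_h+\vec r)=\varphi(\vec q_h)\}$ is the constant-function market maker (CFMM) for potential $\varphi$, and $\mathsf{ValTrades}'_C(h)=\{\vec r+\alpha\mathbf 1\mid\vec r\in\mathbb{R}^n,\ \alpha=C(-\vec q_h-\vec r)-C(-\vec q_h)\}$ is the cashless cost-function market maker for $C$. *)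

theory Defs
  imports "HOL-Analysis.Analysis"
begin

definition ones :: "real ^ 'n" where
  "ones = (\<chi> i. 1)"

definition dominates :: "real ^ 'n \<Rightarrow> real ^ 'n \<Rightarrow> bool" where
  "dominates q q' \<longleftrightarrow> (\<forall>i. q' $ i \<le> q $ i)"

definition one_invariant :: "(real ^ 'n \<Rightarrow> real) \<Rightarrow> bool" where
  "one_invariant C \<longleftrightarrow> (\<forall>q \<alpha>. C (q + \<alpha> *\<^sub>R ones) = C q + \<alpha>)"

definition increasing_fn :: "(real ^ 'n \<Rightarrow> real) \<Rightarrow> bool" where
  "increasing_fn f \<longleftrightarrow> (\<forall>q q'. dominates q q' \<and> q \<noteq> q' \<longrightarrow> f q > f q')"

definition qvec :: "(real ^ 'n) list \<Rightarrow> real ^ 'n" where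
  "qvec h = sum_list h"

text \<open>Constant-function market maker for potential phi.\<close>
definition ValTrades :: "(real ^ 'n \<Rightarrow> real) \<Rightarrow> (real ^ 'n) list \<Rightarrow> (real ^ 'n) set" where
  "ValTrades \<phi> h = {r. \<phi> (qvec h + r) = \<phi> (qvec h)}"

text \<open>Cashless cost-function market maker for cost function C.\<close>
definition ValTrades' :: "(real ^ 'n \<Rightarrow> real) \<Rightarrow> (real ^ 'n) list \<Rightarrow> (real ^ 'n) set" where
  "ValTrades' C h = {r + \<alpha> *\<^sub>R ones | r \<alpha>. \<alpha> = C (- qvec h - r) - C (- qvec h)}"

end

theory Submission
  imports Defs
begin

theorem theorem3p3:
  fixes C :: "real ^ 'n \<Rightarrow> real"
  assumes "convex_on UNIV C"
    and "increasing_fn C"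
    and "one_invariant C"
  defines "\<phi> \<equiv> (\<lambda>q. - C (- q))"
  shows "concave_on UNIV \<phi> \<and> increasing_fn \<phi> \<and>
         (\<forall>h. h \<noteq> [] \<longrightarrow> ValTrades \<phi> h = ValTrades' C h)"
proof (intro conjI allI impI)
  have "convex_on UNIV (\<lambda>q. C (- q))"
  proof (rule convex_onI)
    fix t :: real and x y :: "real ^ 'n"
    assume t: "0 < t" "t < 1"
    have "C (- ((1 - t) *\<^sub>R x + t *\<^sub>R y)) = C ((1 - t) *\<^sub>R (-x) + t *\<^sub>R (-y))"
      by (simp add: algebra_simps)
    also have "\<dots> \<le> (1 - t) * C (-x) + t * C (-y)"
      using assms(1) t by (intro convex_onD) auto
    finally show "C (- ((1 - t) *\<^sub>R x + t *\<^sub>R y)) \<le> (1 - t) * C (-x) + t * C (-y)" .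
  qed auto
  then show "concave_on UNIV \<phi>"
    unfolding concave_on_def \<phi>_def by simp
next
  show "increasing_fn \<phi>"
    unfolding increasing_fn_def
  proof (intro allI impI)
    fix q q' :: "real ^ 'n"
    assume h: "dominates q q' \<and> q \<noteq> q'"
    then have "dominates (-q') (-q) \<and> -q' \<noteq> -q"
      by (auto simp: dominates_def)
    then have "C (-q') > C (-q)" using assms(2) unfolding increasing_fn_def by blast
    then show "\<phi> q > \<phi> q'" unfolding \<phi>_def by simp
  qed
next
  fix h :: "(real ^ 'n) list"
  have inv: "\<And>q \<alpha>. C (q + \<alpha> *\<^sub>R ones) = C q + \<alpha>"
    using assms(3) unfolding one_invariant_def by blast
  show "ValTrades \<phi> h = ValTrades' C h"
  proof
    show "ValTrades \<phi> h \<subseteq> ValTrades' C h"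
    proof
      fix r assume "r \<in> ValTrades \<phi> h"
      then have e0: "C (- (qvec h + r)) = C (- qvec h)"
        unfolding ValTrades_def \<phi>_def by simp
      have m: "- qvec h - r = - (qvec h + r)" by simp
      have e: "C (- qvec h - r) = C (- qvec h)" unfolding m by (rule e0)
      show "r \<in> ValTrades' C h"
        unfolding ValTrades'_def
        by (rule CollectI, rule exI[of _ r], rule exI[of _ 0]) (simp add: e)
    qed
  next
    show "ValTrades' C h \<subseteq> ValTrades \<phi> h"
    proof
      fix s assume "s \<in> ValTrades' C h"
      then obtain r \<alpha> where s: "s = r + \<alpha> *\<^sub>R ones"
        and a: "\<alpha> = C (- qvec h - r) - C (- qvec h)"
        unfolding ValTrades'_def by blast
      have "- (qvec h + s) = (- qvec h - r) + (-\<alpha>) *\<^sub>R ones"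
        using s by (simp add: algebra_simps)
      then have "C (- (qvec h + s)) = C (- qvec h - r) - \<alpha>"
        using inv[of "- qvec h - r" "-\<alpha>"] by (metis diff_conv_add_uminus)
      also have "\<dots> = C (- qvec h)" using a by simp
      finally show "s \<in> ValTrades \<phi> h"
        unfolding ValTrades_def \<phi>_def by simp
    qed
  qed
qed

end
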